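(* Let $1\leq k\leq n$, let $\Lambda_1,\dots,\Lambda_d\subset\mathbb{P}^n$ be $(k-1)$-dimensional linear subspaces satisfying $\mathrm{SP}(n-k)$, and let $P\subset\mathbb{P}^n$ be a linear subspace of dimension $\alpha\geq 0$. Let $2\leq r\leq d-1$ be an integer such that $P\cap\Lambda_i=\emptyset$ for $i=1,\dots,r$ and $P\cap\Lambda_i\neq\emptyset$ for $i=r+1,\dots,d$. Let $\pi_P\colon\mathbb{P}^n\dashrightarrow\mathbb{P}^{n-\alpha-1}$ be the linear projection from $P$ and set $\Gamma_i:=\pi_P(\Lambda_i)$ for $i=1,\dots,r$ (these are $(k-1)$-planes). Then $\Gamma_1,\dots,\Gamma_r$ satisfy $\mathrm{SP}(n-\alpha-1-k)$ in $\mathbb{P}^{n-\alpha-1}$.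
   Context: For $(k-1)$-dimensional linear subspaces $\Lambda_1,\dots,\Lambda_e\subset\mathbb{P}^N$ (not necessarily distinct), $\mathrm{SP}(N-k)$ means: for every $j\in\{1,\dots,e\}$ and every $(N-k)$-dimensional linear subspace $L\subset\mathbb{P}^N$ meeting each $\Lambda_i$ with $i\neq j$, $L$ also meets $\Lambda_j$. *)

theory Defs
  imports Complex_Main
begin

(* Vectors of C^m are modelled as functions nat => complex vanishing from index m on.
   P^N is the projectivisation of C^(N+1); a projective linear subspace is represented
   by its affine cone, a complex linear subspace of C^(N+1). *)

type_synonym cvec = "nat \<Rightarrow> complex"

definition Vec :: "nat \<Rightarrow> cvec set" where
  "Vec m = {v. \<forall>i\<ge>m. v i = 0}"

definition lincomb :: "cvec list \<Rightarrow> (nat \<Rightarrow> complex) \<Rightarrow> cvec" where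
  "lincomb vs c = (\<lambda>i. \<Sum>j<length vs. c j * (vs ! j) i)"

definition cspan :: "cvec list \<Rightarrow> cvec set" where
  "cspan vs = {lincomb vs c | c. True}"

definition lin_indep :: "cvec list \<Rightarrow> bool" where
  "lin_indep vs \<longleftrightarrow> (\<forall>c. lincomb vs c = (\<lambda>_. 0) \<longrightarrow> (\<forall>j<length vs. c j = 0))"

(* S is (the cone over) an m-dimensional projective linear subspace of P^N, m \<ge> -1
   (m = -1 is the empty subspace) *)
definition proj_subspace :: "nat \<Rightarrow> int \<Rightarrow> cvec set \<Rightarrow> bool" where
  "proj_subspace N m S \<longleftrightarrow> m \<ge> -1 \<and>
     (\<exists>vs. length vs = nat (m + 1) \<and> set vs \<subseteq> Vec (N + 1) \<and> lin_indep vs \<and> S = cspan vs)"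

(* two projective subspaces meet iff their cones share a nonzero vector *)
definition meets :: "cvec set \<Rightarrow> cvec set \<Rightarrow> bool" where
  "meets A B \<longleftrightarrow> (\<exists>v\<in>A \<inter> B. v \<noteq> (\<lambda>_. 0))"

definition SP :: "nat \<Rightarrow> int \<Rightarrow> (nat \<Rightarrow> cvec set) \<Rightarrow> nat \<Rightarrow> bool" where
  "SP N m Lam e \<longleftrightarrow>
     (\<forall>j\<in>{1..e}. \<forall>L. proj_subspace N m L \<longrightarrow>
        (\<forall>i\<in>{1..e} - {j}. meets L (Lam i)) \<longrightarrow> meets L (Lam j))"

definition clinear_on :: "nat \<Rightarrow> (cvec \<Rightarrow> cvec) \<Rightarrow> bool" where
  "clinear_on m f \<longleftrightarrow>
     (\<forall>x\<in>Vec m. \<forall>y\<in>Vec m. f (\<lambda>i. x i + y i) = (\<lambda>i. f x i + f y i)) \<and>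
     (\<forall>c. \<forall>x\<in>Vec m. f (\<lambda>i. c * x i) = (\<lambda>i. c * f x i))"

(* f induces a linear projection P^n --> P^(n-alpha-1) from the subspace with cone W:
   a linear surjection C^(n+1) -> C^(n-alpha) with kernel exactly W *)
definition is_linear_projection :: "nat \<Rightarrow> nat \<Rightarrow> cvec set \<Rightarrow> (cvec \<Rightarrow> cvec) \<Rightarrow> bool" where
  "is_linear_projection n alpha W f \<longleftrightarrow>
     clinear_on (n + 1) f \<and> f ` Vec (n + 1) = Vec (n - alpha) \<and>
     {x \<in> Vec (n + 1). f x = (\<lambda>_. 0)} = W"

end

theory Submission
  imports Defs
begin

lemma lincomb_Nil: "lincomb [] c = (\<lambda>_. 0)" by (simp add: lincomb_def)

lemma lincomb_Cons: "lincomb (v#vs) c = (\<lambda>i. c 0 * v i + lincomb vs (\<lambda>j. c (Suc j)) i)"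
  unfolding lincomb_def by (simp only: length_Cons sum.lessThan_Suc_shift) simp

lemma lincomb_append:
  "lincomb (A@B) c = (\<lambda>i. lincomb A c i + lincomb B (\<lambda>j. c (length A + j)) i)"
  by (induction A arbitrary: c) (simp_all add: lincomb_Cons lincomb_Nil algebra_simps)

lemma lincomb_Vec: "set vs \<subseteq> Vec m \<Longrightarrow> lincomb vs c \<in> Vec m"
  by (induction vs arbitrary: c) (auto simp: lincomb_Cons lincomb_Nil Vec_def)

lemma lincomb_zero: "(\<forall>j<length vs. c j = 0) \<Longrightarrow> lincomb vs c = (\<lambda>_. 0)"
  by (simp add: lincomb_def)

lemma clin_add: "clinear_on m f \<Longrightarrow> x \<in> Vec m \<Longrightarrow> y \<in> Vec m \<Longrightarrow>
  f (\<lambda>i. x i + y i) = (\<lambda>i. f x i + f y i)"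
  by (simp add: clinear_on_def)

lemma clin_scale: "clinear_on m f \<Longrightarrow> x \<in> Vec m \<Longrightarrow>
  f (\<lambda>i. c * x i) = (\<lambda>i. c * f x i)"
  by (simp add: clinear_on_def)

lemma clinear_zero: "clinear_on m f \<Longrightarrow> f (\<lambda>_. 0) = (\<lambda>_. 0)"
proof -
  assume a: "clinear_on m f"
  have "(\<lambda>_. 0::complex) \<in> Vec m" by (simp add: Vec_def)
  from clin_scale[OF a this, of 0] show ?thesis by simp
qed

lemma clinear_lincomb:
  "clinear_on m f \<Longrightarrow> set vs \<subseteq> Vec m \<Longrightarrow> f (lincomb vs c) = lincomb (map f vs) c"
proof (induction vs arbitrary: c)
  case Nil thus ?case by (simp add: lincomb_Nil clinear_zero)
next
  case (Cons v vs)
  have v: "v \<in> Vec m" and vs: "set vs \<subseteq> Vec m" using Cons.prems by auto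
  have cv: "(\<lambda>i. c 0 * v i) \<in> Vec m" using v by (simp add: Vec_def)
  have lv: "lincomb vs (\<lambda>j. c (Suc j)) \<in> Vec m" using lincomb_Vec[OF vs] .
  have "f (lincomb (v#vs) c) = f (\<lambda>i. (\<lambda>i. c 0 * v i) i + lincomb vs (\<lambda>j. c (Suc j)) i)"
    by (simp add: lincomb_Cons)
  also have "\<dots> = (\<lambda>i. f (\<lambda>i. c 0 * v i) i + f (lincomb vs (\<lambda>j. c (Suc j))) i)"
    using clin_add[OF Cons.prems(1) cv lv] by simp
  also have "f (\<lambda>i. c 0 * v i) = (\<lambda>i. c 0 * f v i)"
    using clin_scale[OF Cons.prems(1) v] .
  also have "f (lincomb vs (\<lambda>j. c (Suc j))) = lincomb (map f vs) (\<lambda>j. c (Suc j))"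
    using Cons.IH[OF Cons.prems(1) vs] .
  finally show ?case by (simp add: lincomb_Cons)
qed

theorem lemma2p13:
  fixes n k d r alpha :: nat
    and Lam :: "nat \<Rightarrow> cvec set"
    and P :: "cvec set"
    and f :: "cvec \<Rightarrow> cvec"
  assumes "1 \<le> k" and "k \<le> n"
    and "\<And>i. i \<in> {1..d} \<Longrightarrow> proj_subspace n (int k - 1) (Lam i)"
    and "SP n (int n - int k) Lam d"
    and "proj_subspace n (int alpha) P"
    and "2 \<le> r" and "r \<le> d - 1"
    and "\<And>i. i \<in> {1..r} \<Longrightarrow> \<not> meets P (Lam i)"
    and "\<And>i. i \<in> {r+1..d} \<Longrightarrow> meets P (Lam i)"
    and "is_linear_projection n alpha P f"
  shows "SP (n - alpha - 1) (int n - int alpha - 1 - int k) (\<lambda>i. f ` Lam i) r"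
proof -
  from assms(5) obtain ps where ps: "length ps = alpha + 1" "set ps \<subseteq> Vec (n+1)"
      "lin_indep ps" "P = cspan ps"
    unfolding proj_subspace_def by (auto simp: nat_add_distrib)
  have lin: "clinear_on (n+1) f" and surj: "f ` Vec (n+1) = Vec (n - alpha)"
    and ker: "{x \<in> Vec (n+1). f x = (\<lambda>_. 0)} = P"
    using assms(10) unfolding is_linear_projection_def by auto
  have Lam_Vec: "Lam i \<subseteq> Vec (n+1)" if iin: "i \<in> {1..d}" for i
  proof -
    obtain vs where "set vs \<subseteq> Vec (n+1)" "Lam i = cspan vs"
      using assms(3)[OF iin] unfolding proj_subspace_def by blast
    thus ?thesis using lincomb_Vec unfolding cspan_def by auto
  qed
  have f0: "f (\<lambda>_. 0) = (\<lambda>_. 0)" using clinear_zero[OF lin] .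
  show ?thesis unfolding SP_def
  proof (intro ballI allI impI)
    fix j L' assume j: "j \<in> {1..r}"
      and L': "proj_subspace (n - alpha - 1) (int n - int alpha - 1 - int k) L'"
      and mt: "\<forall>i\<in>{1..r} - {j}. meets L' (f ` Lam i)"
    from L' obtain ws where ws: "length ws = nat (int n - int alpha - 1 - int k + 1)"
      "set ws \<subseteq> Vec (n - alpha - 1 + 1)" "lin_indep ws" "L' = cspan ws"
      and m: "int n - int alpha - 1 - int k \<ge> -1"
      unfolding proj_subspace_def by auto
    have nge: "n \<ge> alpha + k" using m by linarith
    have eq1: "n - alpha - 1 + 1 = n - alpha" using nge assms(1) by arith
    have wsV: "set ws \<subseteq> Vec (n - alpha)" using ws(2) eq1 by simp
    define g where "g w = (SOME u. u \<in> Vec (n+1) \<and> f u = w)" for w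
    have g: "g w \<in> Vec (n+1) \<and> f (g w) = w" if "w \<in> set ws" for w
    proof -
      have "w \<in> f ` Vec (n+1)" using that wsV surj by auto
      then obtain u where "u \<in> Vec (n+1) \<and> f u = w" by blast
      thus ?thesis unfolding g_def by (rule someI[where P="\<lambda>u. u \<in> Vec (n+1) \<and> f u = w"])
    qed
    define us where "us = map g ws"
    have usV: "set us \<subseteq> Vec (n+1)" using g by (auto simp: us_def)
    have fus: "map f us = ws" unfolding us_def map_map by (rule map_idI) (simp add: g)
    define Q where "Q = us @ ps"
    define Lt where "Lt = cspan Q"
    have QV: "set Q \<subseteq> Vec (n+1)" using usV ps(2) by (auto simp: Q_def)
    have flus: "f (lincomb us c) = lincomb ws c" for c
      using clinear_lincomb[OF lin usV] fus by simp
    have fP: "f x = (\<lambda>_. 0)" if "x \<in> P" for x using ker that by blast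
    have fps: "f (lincomb ps c) = (\<lambda>_. 0)" for c using fP ps(4) by (auto simp: cspan_def)
    have fQ: "f (lincomb Q c) = lincomb ws c" for c
    proof -
      have "f (lincomb Q c) = f (\<lambda>i. lincomb us c i + lincomb ps (\<lambda>j. c (length us + j)) i)"
        by (simp add: Q_def lincomb_append)
      also have "\<dots> = (\<lambda>i. f (lincomb us c) i + f (lincomb ps (\<lambda>j. c (length us + j))) i)"
        using clin_add[OF lin lincomb_Vec[OF usV] lincomb_Vec[OF ps(2)]] .
      finally show ?thesis using flus fps by simp
    qed
    have indQ: "lin_indep Q"
      unfolding lin_indep_def
    proof (intro allI impI)
      fix c jj assume c0: "lincomb Q c = (\<lambda>_. 0)" and jj: "jj < length Q"
      have "lincomb ws c = (\<lambda>_. 0)" using fQ[of c] c0 f0 by simp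
      hence cu: "\<forall>j<length us. c j = 0" using ws(3) unfolding lin_indep_def us_def by simp
      have "lincomb us c = (\<lambda>_. 0)" using lincomb_zero cu by blast
      hence "lincomb ps (\<lambda>j. c (length us + j)) = (\<lambda>_. 0)" using c0
        by (simp add: Q_def lincomb_append)
      hence cp: "\<forall>j<length ps. c (length us + j) = 0" using ps(3) unfolding lin_indep_def by blast
      show "c jj = 0"
      proof (cases "jj < length us")
        case True thus ?thesis using cu by simp
      next
        case False
        have "jj - length us < length ps" using jj False by (simp add: Q_def)
        hence "c (length us + (jj - length us)) = 0" using cp by blast
        thus ?thesis using False by simp
      qed
    qed
    have lenQ: "length Q = nat (int n - int k + 1)"
      using ws(1) ps(1) nge assms(2) by (simp add: Q_def us_def)
    have LtS: "proj_subspace n (int n - int k) Lt"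
      unfolding proj_subspace_def Lt_def
      using indQ QV lenQ assms(2) by auto
    have inLt: "lincomb Q c \<in> Lt" for c unfolding Lt_def cspan_def by blast
    have PLt: "P \<subseteq> Lt"
    proof
      fix x assume "x \<in> P"
      then obtain e where x: "x = lincomb ps e" using ps(4) by (auto simp: cspan_def)
      define c where "c = (\<lambda>j. if j < length us then 0 else e (j - length us))"
      have z: "lincomb us c = (\<lambda>_. 0)" by (rule lincomb_zero) (simp add: c_def)
      have "lincomb Q c = x" unfolding Q_def lincomb_append x z by (simp add: c_def)
      thus "x \<in> Lt" using inLt by metis
    qed
    have mLt: "\<forall>i\<in>{1..d} - {j}. meets Lt (Lam i)"
    proof
      fix i assume i: "i \<in> {1..d} - {j}"
      show "meets Lt (Lam i)"
      proof (cases "i \<le> r")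
        case False
        hence "i \<in> {r+1..d}" using i by auto
        hence "meets P (Lam i)" using assms(9) by blast
        thus ?thesis using PLt unfolding meets_def by blast
      next
        case True
        hence "i \<in> {1..r} - {j}" using i by auto
        hence "meets L' (f ` Lam i)" using mt by blast
        then obtain x where x: "x \<in> Lam i" "f x \<in> L'" "f x \<noteq> (\<lambda>_. 0)"
          unfolding meets_def by auto
        from x(2) ws(4) obtain c where fx: "f x = lincomb ws c" by (auto simp: cspan_def)
        define y where "y = lincomb us c"
        have yV: "y \<in> Vec (n+1)" using lincomb_Vec[OF usV] y_def by simp
        have xV: "x \<in> Vec (n+1)" using x(1) Lam_Vec i by blast
        have myV: "(\<lambda>i. (-1) * y i) \<in> Vec (n+1)" using yV by (simp add: Vec_def)
        define dd where "dd = (\<lambda>i. x i + (\<lambda>i. (-1) * y i) i)"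
        have ddV: "dd \<in> Vec (n+1)" using xV yV by (simp add: Vec_def dd_def)
        have "f dd = (\<lambda>i. f x i + f (\<lambda>i. (-1) * y i) i)"
          using clin_add[OF lin xV myV] unfolding dd_def by simp
        also have "f (\<lambda>i. (-1) * y i) = (\<lambda>i. (-1) * f y i)"
          using clin_scale[OF lin yV] .
        also have "f y = f x" using fx flus y_def by simp
        finally have "f dd = (\<lambda>_. 0)" by simp
        hence "dd \<in> P" using ker ddV by blast
        then obtain e where e: "dd = lincomb ps e" using ps(4) by (auto simp: cspan_def)
        define c' where "c' = (\<lambda>j. if j < length us then c j else e (j - length us))"
        have "lincomb us c' = y" unfolding y_def c'_def lincomb_def by simp
        moreover have "lincomb ps (\<lambda>j. c' (length us + j)) = dd" unfolding e c'_def by simp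
        ultimately have "lincomb Q c' = (\<lambda>i. y i + dd i)" unfolding Q_def lincomb_append by simp
        also have "\<dots> = x" by (simp add: dd_def)
        finally have "x \<in> Lt" using inLt by metis
        moreover have "x \<noteq> (\<lambda>_. 0)" using x(3) f0 by auto
        ultimately show ?thesis using x(1) unfolding meets_def by blast
      qed
    qed
    have jd: "j \<in> {1..d}" using j assms(7) by auto
    have "meets Lt (Lam j)" using assms(4) jd LtS mLt unfolding SP_def by blast
    then obtain v where v: "v \<in> Lt" "v \<in> Lam j" "v \<noteq> (\<lambda>_. 0)" unfolding meets_def by auto
    from v(1) obtain c where vc: "v = lincomb Q c" unfolding Lt_def cspan_def by auto
    have fvL: "f v \<in> L'" using fQ vc ws(4) by (auto simp: cspan_def)
    have "f v \<noteq> (\<lambda>_. 0)"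
    proof
      assume "f v = (\<lambda>_. 0)"
      hence "v \<in> P" using ker Lam_Vec[OF jd] v(2) by blast
      hence "meets P (Lam j)" using v unfolding meets_def by blast
      thus False using assms(8) j by blast
    qed
    thus "meets L' (f ` Lam j)" using fvL v(2) unfolding meets_def by blast
  qed
qed

end
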